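(* Let $X$ be a first-countable topological space with $X=X_1\sqcup X_2$ (disjoint union), and assume that for every convergent sequence $\bar x=\{x_j\}_{j\in\mathbb{N}}$ contained in $X_1$, the set $L(\bar x)\cap X_2$ has no isolated points, where $L(\bar x)$ is the set of limits of $\bar x$. Then for every subset $S\subseteq X$ that is locally closed (i.e., the intersection of an open and a closed subset of $X$) and Hausdorff in its relative topology, the set $S\cap X_1$ is relatively closed in $S$.
   Context: For a sequence $\bar x=\{x_j\}_{j\in\mathbb{N}}$ in a (not necessarily Hausdorff) topological space, $L(\bar x)$ denotes the set of all points to which the sequence converges. *)

theory Defs
  imports "HOL-Analysis.Analysis"
begin

text \<open>The set L(x) of all points to which a sequence converges
  (the space need not be Hausdorff, so this may contain several points).\<close>
definition seq_limits :: "(nat \<Rightarrow> 'a::topological_space) \<Rightarrow> 'a set" where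
  "seq_limits x = {l. x \<longlonglongrightarrow> l}"

definition locally_closed_set :: "'a::topological_space set \<Rightarrow> bool" where
  "locally_closed_set S \<longleftrightarrow> (\<exists>U C. open U \<and> closed C \<and> S = U \<inter> C)"

definition no_isolated_points :: "'a::topological_space set \<Rightarrow> bool" where
  "no_isolated_points A \<longleftrightarrow> (\<forall>p\<in>A. p islimpt A)"

end

theory Submission
  imports Defs
begin

theorem lemma3p1:
  fixes X1 X2 :: "'a::first_countable_topology set"
  assumes "X1 \<union> X2 = UNIV" and "X1 \<inter> X2 = {}"
    and "\<And>x :: nat \<Rightarrow> 'a. range x \<subseteq> X1 \<Longrightarrow> (\<exists>l. x \<longlonglongrightarrow> l)
           \<Longrightarrow> no_isolated_points (seq_limits x \<inter> X2)"
  shows "\<And>S. locally_closed_set S \<Longrightarrow> Hausdorff_space (top_of_set S)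
           \<Longrightarrow> closedin (top_of_set S) (S \<inter> X1)"
proof -
  fix S :: "'a set"
  assume lc: "locally_closed_set S" and H: "Hausdorff_space (top_of_set S)"
  obtain U C where U: "open U" and C: "closed C" and SUC: "S = U \<inter> C"
    using lc unfolding locally_closed_set_def by blast
  show "closedin (top_of_set S) (S \<inter> X1)"
    unfolding closedin_limpt
  proof (intro conjI allI impI)
    show "S \<inter> X1 \<subseteq> S" by blast
    fix p assume pp: "p islimpt S \<inter> X1 \<and> p \<in> S"
    show "p \<in> S \<inter> X1"
    proof (rule ccontr)
      assume "p \<notin> S \<inter> X1"
      with pp assms(1) have pX2: "p \<in> X2" by blast
      from pp obtain f where f: "\<And>n::nat. f n \<in> S \<inter> X1 - {p}" and fl: "f \<longlonglongrightarrow> p"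
        using islimpt_sequential by blast
      have "range f \<subseteq> X1" using f by blast
      then have ni: "no_isolated_points (seq_limits f \<inter> X2)"
        using assms(3) fl by blast
      have "p \<in> seq_limits f \<inter> X2" using fl pX2 unfolding seq_limits_def by simp
      with ni have "p islimpt (seq_limits f \<inter> X2)" unfolding no_isolated_points_def by blast
      moreover have "p \<in> U" using pp SUC by blast
      ultimately obtain q where q: "q \<in> seq_limits f \<inter> X2" "q \<in> U" "q \<noteq> p"
        using U unfolding islimpt_def by blast
      have fq: "f \<longlonglongrightarrow> q" using q unfolding seq_limits_def by simp
      have "q \<in> C" using closed_sequentially[OF C _ fq] f SUC by blast
      with q have qS: "q \<in> S" using SUC by blast
      obtain A B where A: "openin (top_of_set S) A" and B: "openin (top_of_set S) B"
        and pA: "p \<in> A" and qB: "q \<in> B" and dj: "disjnt A B"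
      proof -
        have "p \<in> topspace (top_of_set S)" "q \<in> topspace (top_of_set S)"
          using pp qS by auto
        then show ?thesis using H q(3) that unfolding Hausdorff_space_def by blast
      qed
      obtain TA where TA: "open TA" "A = S \<inter> TA" using A openin_open by blast
      obtain TB where TB: "open TB" "B = S \<inter> TB" using B openin_open by blast
      have "eventually (\<lambda>n. f n \<in> TA) sequentially"
        using fl TA pA topological_tendstoD by blast
      moreover have "eventually (\<lambda>n. f n \<in> TB) sequentially"
        using fq TB qB topological_tendstoD by blast
      ultimately have "eventually (\<lambda>n. f n \<in> TA \<and> f n \<in> TB) sequentially"
        by (rule eventually_conj)
      then obtain N where "\<forall>n\<ge>N. f n \<in> TA \<and> f n \<in> TB"
        unfolding eventually_sequentially by blast
      then obtain n where "f n \<in> TA" "f n \<in> TB" by blast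
      then have "f n \<in> A \<inter> B" using f TA TB by blast
      with dj show False unfolding disjnt_def by blast
    qed
  qed
qed

end
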